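(* Realize $\mathfrak{h}_3$ as the strictly upper triangular real $3\times3$ matrices, and write $M(x,y,z)$ for the matrix with entries $x$ at position $(1,2)$, $y$ at $(2,3)$, $z$ at $(1,3)$. For every $a\in\mathbb{R}$ and every continuous sublinear function $c:\mathbb{R}\to\mathbb{R}$, the function defined for $x\ne0$ by \[\zeta(M(x,y,z))=c(y/x)\cdot x+a\cdot y\] extends continuously to an $\mathrm{Ad}$-invariant Lie quasi-state on $\mathfrak{h}_3$ (with $\zeta(M(0,y,z))=a y$). Conversely, every continuous $\mathrm{Ad}$-invariant Lie quasi-state on $\mathfrak{h}_3$ is of this form.
   Context: A Lie quasi-state is $\zeta:\mathfrak{g}\to\mathbb{R}$ with $\zeta(aX+bY)=a\zeta(X)+b\zeta(Y)$ for all $a,b\in\mathbb{R}$ and commuting $X,Y$. $\mathrm{Ad}$-invariant means invariant under the adjoint group. A function $c:\mathbb{R}\to\mathbb{R}$ is sublinear if $c(s)/|s|\to0$ as $|s|\to\infty$. *)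

theory Defs
  imports "HOL-Analysis.Analysis" "HOL-Library.Numeral_Type"
begin

text \<open>Rows/columns are indexed by the elements 1, 2, 3 of the three-element type 3
  (note 3 = 0 in this type; the three labels are distinct).\<close>

definition Mh :: "real \<Rightarrow> real \<Rightarrow> real \<Rightarrow> real^3^3" where
  "Mh x y z = (\<chi> i j. if i = 1 \<and> j = 2 then x
                       else if i = 2 \<and> j = 3 then y
                       else if i = 1 \<and> j = 3 then z else 0)"

definition h3 :: "(real^3^3) set" where
  "h3 = {Mh x y z | x y z. True}"

text \<open>The Heisenberg group (unipotent upper triangular matrices); its conjugation
  action on h3 is the adjoint group of h3.\<close>
definition H3 :: "(real^3^3) set" where
  "H3 = {mat 1 + Mh p q r | p q r. True}"

definition Ad :: "real^3^3 \<Rightarrow> real^3^3 \<Rightarrow> real^3^3" where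
  "Ad g X = g ** X ** matrix_inv g"

definition lie_quasi_state_h3 :: "(real^3^3 \<Rightarrow> real) \<Rightarrow> bool" where
  "lie_quasi_state_h3 \<zeta> \<longleftrightarrow>
     (\<forall>X\<in>h3. \<forall>Y\<in>h3. X ** Y = Y ** X \<longrightarrow>
        (\<forall>a b::real. \<zeta> (a *\<^sub>R X + b *\<^sub>R Y) = a * \<zeta> X + b * \<zeta> Y))"

definition Ad_invariant_h3 :: "(real^3^3 \<Rightarrow> real) \<Rightarrow> bool" where
  "Ad_invariant_h3 \<zeta> \<longleftrightarrow> (\<forall>g\<in>H3. \<forall>X\<in>h3. \<zeta> (Ad g X) = \<zeta> X)"

definition sublinear :: "(real \<Rightarrow> real) \<Rightarrow> bool" where
  "sublinear c \<longleftrightarrow> ((\<lambda>s. c s / \<bar>s\<bar>) \<longlongrightarrow> 0) at_infinity"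

end

theory Submission imports Defs begin

lemma sublin_bound:
  assumes cc: "continuous_on UNIV c" and sl: "sublinear c" and e: "e > 0"
  shows "\<exists>C\<ge>0. \<forall>t. \<bar>c t\<bar> \<le> e*\<bar>t\<bar> + C"
proof -
  have "eventually (\<lambda>s. dist (c s / \<bar>s\<bar>) 0 < e) at_infinity"
    using sl e unfolding sublinear_def tendsto_iff by blast
  then obtain b where b: "\<And>s. b \<le> norm s \<Longrightarrow> \<bar>c s / \<bar>s\<bar>\<bar> < e"
    unfolding eventually_at_infinity by auto
  define R where "R = max b 1"
  have "compact (c ` cball 0 R)"
    by (rule compact_continuous_image) (auto intro: continuous_on_subset[OF cc])
  then obtain B where B: "B > 0" "\<And>t. t \<in> cball 0 R \<Longrightarrow> \<bar>c t\<bar> \<le> B"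
    using compact_imp_bounded bounded_pos by (metis image_eqI real_norm_def)
  have "\<bar>c t\<bar> \<le> e*\<bar>t\<bar> + B" for t
  proof (cases "\<bar>t\<bar> \<le> R")
    case True
    then have "\<bar>c t\<bar> \<le> B" using B by (simp add: dist_real_def)
    then show ?thesis using e by (smt (verit) mult_nonneg_nonneg abs_ge_zero)
  next
    case False
    then have t0: "\<bar>t\<bar> > 0" "b \<le> norm t" using R_def by auto
    have "\<bar>c t / \<bar>t\<bar>\<bar> < e" using b t0 by blast
    then have "\<bar>c t\<bar> < e * \<bar>t\<bar>" using t0 by (simp add: abs_div divide_less_eq)
    then show ?thesis using B by simp
  qed
  then show ?thesis using B by (intro exI[of _ B]) auto
qed

definition Hc :: "(real \<Rightarrow> real) \<Rightarrow> real \<times> real \<Rightarrow> real" where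
  "Hc c p = (if fst p = 0 then 0 else c (snd p / fst p) * fst p)"

lemma Hc_cont:
  assumes cc: "continuous_on UNIV c" and sl: "sublinear c"
  shows "isCont (Hc c) p"
proof (cases "fst p = 0")
  case False
  have ev: "eventually (\<lambda>q. Hc c q = c (snd q / fst q) * fst q) (nhds p)"
  proof -
    have "open {q::real\<times>real. fst q \<noteq> 0}"
      by (intro open_Collect_neq continuous_intros)
    then show ?thesis using False unfolding eventually_nhds Hc_def
      by (intro exI[of _ "{q. fst q \<noteq> 0}"]) auto
  qed
  have c1: "isCont c (snd p / fst p)"
    using cc continuous_on_eq_continuous_at[OF open_UNIV] by blast
  have c2: "isCont (\<lambda>q. snd q / fst q) p" using False by (intro continuous_intros) auto
  have "isCont (\<lambda>q. c (snd q / fst q) * fst q) p"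
    using isCont_o2[OF c2 c1] by (intro continuous_intros) auto
  then show ?thesis using isCont_cong[OF ev] by simp
next
  case True
  obtain u0 v0 where p: "p = (u0, v0)" by (cases p)
  with True have u0: "u0 = 0" by simp
  show ?thesis unfolding continuous_at_eps_delta
  proof (intro allI impI)
    fix e :: real assume e: "e > 0"
    define ee where "ee = e / (2 * (\<bar>v0\<bar> + 1))"
    have ee: "ee > 0" using e by (simp add: ee_def add_pos_nonneg)
    obtain C where C: "C \<ge> 0" "\<And>t. \<bar>c t\<bar> \<le> ee*\<bar>t\<bar> + C"
      using sublin_bound[OF cc sl ee] by blast
    define d where "d = min 1 (e / (2*(C+1)))"
    have d: "d > 0" using e C by (simp add: d_def)
    have "dist (Hc c q) (Hc c p) < e" if q: "dist q p < d" for q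
    proof -
      obtain u v where qq: "q = (u,v)" by (cases q)
      have hu: "\<bar>u\<bar> < d" using dist_fst_le[of q p] q by (simp add: qq p u0 dist_real_def)
      have hv: "\<bar>v - v0\<bar> < d" using dist_snd_le[of q p] q by (simp add: qq p dist_real_def)
      have hp: "Hc c p = 0" using True by (simp add: Hc_def)
      have bnd: "\<bar>Hc c q\<bar> \<le> ee*\<bar>v\<bar> + C*\<bar>u\<bar>"
      proof (cases "u = 0")
        case True then show ?thesis using C ee by (simp add: Hc_def qq)
      next
        case False
        have "\<bar>Hc c q\<bar> = \<bar>c (v/u)\<bar> * \<bar>u\<bar>" using False by (simp add: Hc_def qq abs_mult)
        also have "\<dots> \<le> (ee*\<bar>v/u\<bar> + C) * \<bar>u\<bar>" by (rule mult_right_mono[OF C(2)]) simp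
        also have "\<dots> = ee*\<bar>v\<bar> + C*\<bar>u\<bar>" using False by (simp add: algebra_simps abs_div)
        finally show ?thesis .
      qed
      have "\<bar>v\<bar> < \<bar>v0\<bar> + 1" using hv d_def by linarith
      then have "ee*\<bar>v\<bar> \<le> ee * (\<bar>v0\<bar> + 1)" using ee by (intro mult_left_mono) auto
      also have "\<dots> = e/2" using ee_def by (simp add: field_simps add_pos_nonneg)
      finally have 1: "ee*\<bar>v\<bar> \<le> e/2" .
      have "C*\<bar>u\<bar> \<le> C * (e / (2*(C+1)))" using hu d_def C by (intro mult_left_mono) auto
      also have "\<dots> < e/2" using C e by (simp add: field_simps)
      finally have 2: "C*\<bar>u\<bar> < e/2" .
      show ?thesis using bnd 1 2 hp by (simp add: dist_real_def)
    qed
    then show "\<exists>d>0. \<forall>q. dist q p < d \<longrightarrow> dist (Hc c q) (Hc c p) < e" using d by blast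
  qed
qed

lemma Mh_nth: "Mh x y z $ i $ j = (if i = 1 \<and> j = 2 then x
                       else if i = 2 \<and> j = 3 then y
                       else if i = 1 \<and> j = 3 then z else 0)"
  by (simp add: Mh_def)
lemma Mh_eq: "Mh x y z = Mh x' y' z' \<longleftrightarrow> x = x' \<and> y = y' \<and> z = z'"
  by (auto simp: vec_eq_iff Mh_nth forall_3)
lemma Mh_mult: "Mh x y z ** Mh x' y' z' = Mh 0 0 (x*y')"
  by (simp add: vec_eq_iff Mh_nth forall_3 matrix_matrix_mult_def sum_3)
lemma Mh_lin: "a *\<^sub>R Mh x y z + b *\<^sub>R Mh x' y' z' = Mh (a*x+b*x') (a*y+b*y') (a*z+b*z')"
  by (simp add: vec_eq_iff Mh_nth forall_3)
lemma Mh_scale: "a *\<^sub>R Mh x y z = Mh (a*x) (a*y) (a*z)"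
  by (simp add: vec_eq_iff Mh_nth forall_3)
lemma Mh_0: "Mh 0 0 0 = 0"
  by (simp add: vec_eq_iff Mh_nth forall_3)
lemma g_mult: "(mat 1 + Mh p q r) ** (mat 1 + Mh p' q' r') = mat 1 + Mh (p+p') (q+q') (r+r'+p*q')"
  by (simp add: vec_eq_iff Mh_nth forall_3 matrix_matrix_mult_def sum_3 mat_def)
lemma g_mult2: "(mat 1 + Mh p q r) ** Mh x y z = Mh x y (z + p*y)"
  by (simp add: vec_eq_iff Mh_nth forall_3 matrix_matrix_mult_def sum_3 mat_def)
lemma g_mult3: "Mh x y z ** (mat 1 + Mh p q r) = Mh x y (z + x*q)"
  by (simp add: vec_eq_iff Mh_nth forall_3 matrix_matrix_mult_def sum_3 mat_def)

lemma g_inv: "matrix_inv (mat 1 + Mh p q r) = mat 1 + Mh (-p) (-q) (p*q - r)"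
proof -
  let ?A = "mat 1 + Mh p q r" and ?B = "mat 1 + Mh (-p) (-q) (p*q - r)"
  have AB: "?A ** ?B = mat 1" and BA: "?B ** ?A = mat 1"
    by (simp_all add: g_mult Mh_0)
  have uniq: "A' = ?B" if "?A ** A' = mat 1 \<and> A' ** ?A = mat 1" for A'
  proof -
    have "A' = A' ** (?A ** ?B)" using AB by (simp add: matrix_mul_rid)
    also have "\<dots> = (A' ** ?A) ** ?B" by (simp add: matrix_mul_assoc)
    also have "\<dots> = ?B" using that by (simp add: matrix_mul_lid)
    finally show ?thesis .
  qed
  show ?thesis unfolding matrix_inv_def
    by (rule uniq, rule someI[of "\<lambda>A'. ?A ** A' = mat 1 \<and> A' ** ?A = mat 1" ?B]) (use AB BA in blast)
qed

lemma Ad_Mh: "Ad (mat 1 + Mh p q r) (Mh x y z) = Mh x y (z + p*y - x*q)"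
  by (simp add: Ad_def g_inv g_mult2 g_mult3)

lemma Mh_in: "Mh x y z \<in> h3" by (auto simp: h3_def)
lemma g_in: "mat 1 + Mh p q r \<in> H3" by (auto simp: H3_def)

lemma Hc_line: "Hc c (u, t*u) = c t * u"
  by (simp add: Hc_def)

lemma Hc_lin:
  assumes "x*y' = x'*y"
  shows "Hc c (\<alpha>*x+\<beta>*x', \<alpha>*y+\<beta>*y') = \<alpha>*Hc c (x,y) + \<beta>*Hc c (x',y')"
proof -
  consider "x = 0" "x' = 0" | t where "y = t*x" "y' = t*x'"
  proof (cases "x = 0")
    case True
    show ?thesis
    proof (cases "x' = 0")
      case True with \<open>x = 0\<close> that(1) show ?thesis by blast
    next
      case False
      then have "y = (y'/x')*x" "y' = (y'/x')*x'" using assms True by (auto simp: field_simps)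
      with that(2) show ?thesis by blast
    qed
  next
    case False
    then have "y = (y/x)*x" "y' = (y/x)*x'" using assms by (auto simp: field_simps)
    with that(2) show ?thesis by blast
  qed
  then show ?thesis
  proof cases
    case 1 then show ?thesis by (simp add: Hc_def)
  next
    case 2
    have "\<alpha>*y+\<beta>*y' = t*(\<alpha>*x+\<beta>*x')" using 2 by (simp add: algebra_simps)
    then have "Hc c (\<alpha>*x+\<beta>*x', \<alpha>*y+\<beta>*y') = c t * (\<alpha>*x+\<beta>*x')"
      by (simp only: Hc_line)
    then show ?thesis using 2 by (simp add: Hc_line algebra_simps)
  qed
qed

lemma h3E: "X \<in> h3 \<Longrightarrow> (\<And>x y z. X = Mh x y z \<Longrightarrow> P) \<Longrightarrow> P"
  by (auto simp: h3_def)

lemma forward: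
  assumes cc: "continuous_on UNIV c" and sl: "sublinear c"
  shows "\<exists>\<zeta>. continuous_on h3 \<zeta> \<and> lie_quasi_state_h3 \<zeta> \<and> Ad_invariant_h3 \<zeta> \<and>
                 (\<forall>x y z. x \<noteq> 0 \<longrightarrow> \<zeta> (Mh x y z) = c (y / x) * x + a * y) \<and>
                 (\<forall>y z. \<zeta> (Mh 0 y z) = a * y)"
proof -
  define \<zeta> where "\<zeta> X = Hc c (X$1$2, X$2$3) + a * X$2$3" for X :: "real^3^3"
  have zM: "\<zeta> (Mh x y z) = Hc c (x, y) + a * y" for x y z
    by (simp add: \<zeta>_def Mh_nth)
  have "continuous_on UNIV \<zeta>"
  proof -
    have "isCont \<zeta> X" for X
    proof -
      have g: "isCont (\<lambda>X::real^3^3. (X$1$2, X$2$3)) X" by (intro continuous_intros)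
      have "isCont (\<lambda>X::real^3^3. Hc c (X$1$2, X$2$3)) X"
        using isCont_o2[OF g Hc_cont[OF cc sl]] .
      then show ?thesis unfolding \<zeta>_def by (intro continuous_intros)
    qed
    then show ?thesis by (simp add: continuous_on_eq_continuous_at)
  qed
  then have "continuous_on h3 \<zeta>" by (rule continuous_on_subset) simp
  moreover have "lie_quasi_state_h3 \<zeta>"
    unfolding lie_quasi_state_h3_def
  proof (intro ballI impI allI)
    fix X Y :: "real^3^3" and \<alpha> \<beta> :: real
    assume X: "X \<in> h3" and Y: "Y \<in> h3" and com: "X ** Y = Y ** X"
    obtain x y z where Xe: "X = Mh x y z" using X by (rule h3E)
    obtain x' y' z' where Ye: "Y = Mh x' y' z'" using Y by (rule h3E)
    have "x*y' = x'*y" using com by (simp add: Xe Ye Mh_mult Mh_eq)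
    then show "\<zeta> (\<alpha> *\<^sub>R X + \<beta> *\<^sub>R Y) = \<alpha> * \<zeta> X + \<beta> * \<zeta> Y"
      by (simp add: Xe Ye Mh_lin zM Hc_lin algebra_simps)
  qed
  moreover have "Ad_invariant_h3 \<zeta>"
    unfolding Ad_invariant_h3_def
  proof (intro ballI)
    fix g X assume "g \<in> H3" "X \<in> h3"
    then obtain p q r x y z where "g = mat 1 + Mh p q r" "X = Mh x y z"
      by (auto simp: H3_def h3_def)
    then show "\<zeta> (Ad g X) = \<zeta> X" by (simp add: Ad_Mh zM)
  qed
  moreover have "\<forall>x y z. x \<noteq> 0 \<longrightarrow> \<zeta> (Mh x y z) = c (y / x) * x + a * y"
    by (simp add: zM Hc_def)
  moreover have "\<forall>y z. \<zeta> (Mh 0 y z) = a * y"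
    by (simp add: zM Hc_def)
  ultimately show ?thesis by blast
qed

lemma converse:
  assumes zc: "continuous_on h3 \<zeta>" and lq: "lie_quasi_state_h3 \<zeta>" and ai: "Ad_invariant_h3 \<zeta>"
  shows "\<exists>(a::real) (c::real \<Rightarrow> real). continuous_on UNIV c \<and> sublinear c \<and>
                 (\<forall>x y z. x \<noteq> 0 \<longrightarrow> \<zeta> (Mh x y z) = c (y / x) * x + a * y) \<and>
                 (\<forall>y z. \<zeta> (Mh 0 y z) = a * y)"
proof -
  define a where "a = \<zeta> (Mh 0 1 0)"
  define c where "c t = \<zeta> (Mh 1 t 0) - a * t" for t
  have hom: "\<zeta> (t *\<^sub>R X) = t * \<zeta> X" if "X \<in> h3" for t X
    using lq that unfolding lie_quasi_state_h3_def
    by (metis (no_types, lifting) add.right_neutral mult_zero_left scaleR_zero_left)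
  have homM: "\<zeta> (Mh (t*x) (t*y) (t*z)) = t * \<zeta> (Mh x y z)" for t x y z
    using hom[OF Mh_in, of t x y z] by (simp add: Mh_scale)
  have adM: "\<zeta> (Mh x y (z + p*y - x*q)) = \<zeta> (Mh x y z)" for x y z p q
    using ai g_in[of p q 0] Mh_in[of x y z] unfolding Ad_invariant_h3_def
    by (metis Ad_Mh)
  have zinv: "\<zeta> (Mh x y z) = \<zeta> (Mh x y z')" if "x \<noteq> 0 \<or> y \<noteq> 0" for x y z z'
  proof (cases "y = 0")
    case False
    have "z + ((z'-z)/y)*y - x*0 = z'" using False by simp
    then show ?thesis using adM[of x y z "(z'-z)/y" 0] by simp
  next
    case True
    with that have "x \<noteq> 0" by simp
    then have "z + 0*y - x*((z-z')/x) = z'" by simp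
    then show ?thesis using adM[of x y z 0 "(z-z')/x"] by simp
  qed
  have c001: "\<zeta> (Mh 0 0 1) = 0"
  proof -
    have "Mh 1 0 0 ** Mh 0 0 1 = Mh 0 0 1 ** Mh 1 0 0" by (simp add: Mh_mult)
    then have "\<zeta> (1 *\<^sub>R Mh 1 0 0 + 1 *\<^sub>R Mh 0 0 1) = 1 * \<zeta> (Mh 1 0 0) + 1 * \<zeta> (Mh 0 0 1)"
      using lq Mh_in unfolding lie_quasi_state_h3_def by blast
    then have "\<zeta> (Mh 1 0 1) = \<zeta> (Mh 1 0 0) + \<zeta> (Mh 0 0 1)"
      using Mh_lin[of 1 1 0 0 1 0 0 1] by simp
    moreover have "\<zeta> (Mh 1 0 1) = \<zeta> (Mh 1 0 0)" by (rule zinv) simp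
    ultimately show ?thesis by simp
  qed
  have z0: "\<zeta> (Mh 0 y z) = a * y" for y z
  proof (cases "y = 0")
    case True
    then show ?thesis using homM[of z 0 0 1] c001 by simp
  next
    case False
    have "\<zeta> (Mh 0 y z) = \<zeta> (Mh 0 y 0)" using False by (rule zinv[OF disjI2])
    also have "\<dots> = y * a" using homM[of y 0 1 0] by (simp add: a_def)
    finally show ?thesis by simp
  qed
  have z1: "\<zeta> (Mh x y z) = c (y / x) * x + a * y" if "x \<noteq> 0" for x y z
  proof -
    have "\<zeta> (Mh x y z) = \<zeta> (Mh x y 0)" using that by (rule zinv[OF disjI1])
    also have "\<dots> = x * \<zeta> (Mh 1 (y/x) 0)" using homM[of x 1 "y/x" 0] that by simp
    also have "\<dots> = c (y / x) * x + a * y" using that by (simp add: c_def algebra_simps)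
    finally show ?thesis .
  qed
  have lineC: "continuous_on UNIV (\<lambda>t. Mh u t 0)" for u
  proof -
    have eq: "(\<lambda>t. Mh u t 0) = (\<lambda>t. 1 *\<^sub>R Mh u 0 0 + t *\<^sub>R Mh 0 1 0)"
      by (simp add: vec_eq_iff Mh_nth forall_3 fun_eq_iff)
    show ?thesis unfolding eq by (intro continuous_intros)
  qed
  have lineC2: "continuous_on UNIV (\<lambda>t. Mh t 1 0)"
  proof -
    have eq: "(\<lambda>t. Mh t 1 0) = (\<lambda>t. t *\<^sub>R Mh 1 0 0 + 1 *\<^sub>R Mh 0 1 0)"
      by (simp add: vec_eq_iff Mh_nth forall_3 fun_eq_iff)
    show ?thesis unfolding eq by (intro continuous_intros)
  qed
  have cc: "continuous_on UNIV c"
  proof -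
    have "continuous_on UNIV (\<lambda>t. \<zeta> (Mh 1 t 0))"
      by (rule continuous_on_compose2[OF zc lineC]) (auto simp: Mh_in)
    then show ?thesis unfolding c_def by (intro continuous_intros)
  qed
  have sl: "sublinear c"
  proof -
    have t1: "((\<lambda>s::real. Mh (inverse s) 1 0) \<longlongrightarrow> Mh 0 1 0) at_infinity"
    proof -
      have "isCont (\<lambda>t. Mh t 1 0) 0" using lineC2 by (simp add: continuous_on_eq_continuous_at)
      then show ?thesis using isCont_tendsto_compose[OF _ tendsto_inverse_0] by fastforce
    qed
    have t2: "((\<lambda>s. \<zeta> (Mh (inverse s) 1 0)) \<longlongrightarrow> a) at_infinity"
      unfolding a_def
      using continuous_on_tendsto_compose[OF zc t1 Mh_in] by (simp add: Mh_in o_def)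
    then have t3: "((\<lambda>s. \<bar>\<zeta> (Mh (inverse s) 1 0) - a\<bar>) \<longlongrightarrow> 0) at_infinity"
      using tendsto_rabs[OF tendsto_diff[OF t2 tendsto_const[of a]]] by simp
    have ev: "eventually (\<lambda>s::real. \<bar>\<zeta> (Mh (inverse s) 1 0) - a\<bar> = norm (c s / \<bar>s\<bar>)) at_infinity"
      unfolding eventually_at_infinity
    proof (intro exI[of _ 1] allI impI)
      fix s :: real assume "1 \<le> norm s"
      then have s0: "s \<noteq> 0" by auto
      have "\<zeta> (Mh 1 s 0) = s * \<zeta> (Mh (inverse s) 1 0)"
        using homM[of s "inverse s" 1 0] s0 by simp
      then have "c s / \<bar>s\<bar> = (s / \<bar>s\<bar>) * (\<zeta> (Mh (inverse s) 1 0) - a)"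
        by (simp add: c_def algebra_simps diff_divide_distrib)
      then show "\<bar>\<zeta> (Mh (inverse s) 1 0) - a\<bar> = norm (c s / \<bar>s\<bar>)"
        using s0 by (simp add: abs_mult)
    qed
    have "((\<lambda>s. norm (c s / \<bar>s\<bar>)) \<longlongrightarrow> 0) at_infinity"
      using tendsto_cong[OF ev] t3 by simp
    then show ?thesis unfolding sublinear_def tendsto_norm_zero_iff .
  qed
  show ?thesis using cc sl z0 z1 by blast
qed

theorem mainTheorem15:
  shows "(\<forall>(a::real) (c::real \<Rightarrow> real). continuous_on UNIV c \<and> sublinear c \<longrightarrow>
           (\<exists>\<zeta>. continuous_on h3 \<zeta> \<and> lie_quasi_state_h3 \<zeta> \<and> Ad_invariant_h3 \<zeta> \<and>
                 (\<forall>x y z. x \<noteq> 0 \<longrightarrow> \<zeta> (Mh x y z) = c (y / x) * x + a * y) \<and>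
                 (\<forall>y z. \<zeta> (Mh 0 y z) = a * y)))
       \<and> (\<forall>\<zeta>. continuous_on h3 \<zeta> \<and> lie_quasi_state_h3 \<zeta> \<and> Ad_invariant_h3 \<zeta> \<longrightarrow>
           (\<exists>(a::real) (c::real \<Rightarrow> real). continuous_on UNIV c \<and> sublinear c \<and>
                 (\<forall>x y z. x \<noteq> 0 \<longrightarrow> \<zeta> (Mh x y z) = c (y / x) * x + a * y) \<and>
                 (\<forall>y z. \<zeta> (Mh 0 y z) = a * y)))"
  using forward converse by blast

end
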